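(* For all integers $k\ge2$ and $n\ge1$, \[ k\sum_{i=1}^{n}\bigl(\sigma(i)+\sigma_o(i)\bigr)(-1)^{n-i}r_k(n-i)=(-1)^{n+1}n\,r_k(n). \]
   Context: $r_k(m)$ is the number of $(x_1,\dots,x_k)\in\mathbb{Z}^k$ with $x_1^2+\dots+x_k^2=m$; in particular $r_k(0)=1$. $\sigma(i)$ is the sum of positive divisors of $i$ and $\sigma_o(i)$ the sum of odd positive divisors of $i$. *)

theory Defs
  imports Main
begin

definition r :: "nat \<Rightarrow> nat \<Rightarrow> nat" where
  "r k m = card {x :: nat \<Rightarrow> int. (\<forall>i\<ge>k. x i = 0) \<and> (\<Sum>i<k. (x i)^2) = int m}"

definition sigma :: "nat \<Rightarrow> nat" where
  "sigma n = (\<Sum>d\<in>{d. d dvd n \<and> 0 < d}. d)"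

definition sigma_odd :: "nat \<Rightarrow> nat" where
  "sigma_odd n = (\<Sum>d\<in>{d. d dvd n \<and> 0 < d \<and> odd d}. d)"

end

theory Submission
  imports Defs "HOL-Computational_Algebra.Formal_Power_Series"
begin

unbundle fps_syntax


definition lowz :: "nat \<Rightarrow> int fps \<Rightarrow> bool" where
  "lowz m f \<longleftrightarrow> (\<forall>i<m. f $ i = 0)"

lemma lowz_mono: "lowz m f \<Longrightarrow> m' \<le> m \<Longrightarrow> lowz m' f"
  by (auto simp: lowz_def)

lemma lowz_add: "lowz m f \<Longrightarrow> lowz m g \<Longrightarrow> lowz m (f + g)"
  by (auto simp: lowz_def)

lemma lowz_diff: "lowz m f \<Longrightarrow> lowz m g \<Longrightarrow> lowz m (f - g)"
  by (auto simp: lowz_def)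

lemma lowz_mult_left: "lowz m f \<Longrightarrow> lowz m (g * f)"
  by (auto simp: lowz_def fps_mult_nth intro!: sum.neutral)

lemma lowz_mult_right: "lowz m f \<Longrightarrow> lowz m (f * g)"
  using lowz_mult_left[of m f g] by (simp add: mult.commute)

lemma lowz_X_power: "lowz m f \<Longrightarrow> lowz (m + e) (fps_X ^ e * f)"
  by (auto simp: lowz_def fps_X_power_mult_nth)

lemma lowz_cancel:
  assumes "g $ 0 = 1" "lowz m (g * u)"
  shows "lowz m u"
  unfolding lowz_def
proof (intro allI impI)
  fix i assume "i < m"
  then show "u $ i = 0"
  proof (induction i rule: less_induct)
    case (less i)
    have "0 = (g * u) $ i" using assms(2) less.prems by (simp add: lowz_def)
    also have "\<dots> = (\<Sum>j=0..i. g $ j * u $ (i - j))" by (simp add: fps_mult_nth)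
    also have "\<dots> = g $ 0 * u $ (i - 0) + (\<Sum>j=Suc 0..i. g $ j * u $ (i - j))"
      by (simp add: sum.atLeast_Suc_atMost)
    also have "(\<Sum>j=Suc 0..i. g $ j * u $ (i - j)) = 0"
      using less by (intro sum.neutral) auto
    finally show ?case using assms(1) by simp
  qed
qed

lemma lowz_power_diff: "lowz m (f - g) \<Longrightarrow> lowz m (f ^ k - g ^ k)"
proof (induction k)
  case 0 then show ?case by (simp add: lowz_def)
next
  case (Suc k)
  have "f ^ Suc k - g ^ Suc k = f * (f ^ k - g ^ k) + (f - g) * g ^ k"
    by (simp add: algebra_simps)
  then show ?case using Suc by (metis lowz_add lowz_mult_left lowz_mult_right)
qed

definition qP :: "nat \<Rightarrow> int fps" where
  "qP M = (\<Prod>j=1..M. 1 - fps_X ^ (2 * j))"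

lemma qP_0[simp]: "qP 0 = 1" by (simp add: qP_def)
lemma qP_Suc: "qP (Suc M) = qP M * (1 - fps_X ^ (2 * Suc M))"
  by (simp add: qP_def)
lemma qP_nth0: "qP M $ 0 = 1"
  by (induction M) (auto simp: qP_Suc fps_mult_nth)

lemma qP_approx: "M \<le> M' \<Longrightarrow> lowz (2 * M + 2) (qP M' - qP M)"
proof (induction M' rule: dec_induct)
  case base then show ?case by (simp add: lowz_def)
next
  case (step M')
  have "qP (Suc M') - qP M = (qP M' - qP M) - fps_X ^ (2 * Suc M') * qP M'"
    by (simp add: qP_Suc algebra_simps)
  moreover have "lowz (2 * M + 2) (fps_X ^ (2 * Suc M') * qP M')"
  proof -
    have "lowz (0 + 2 * Suc M') (fps_X ^ (2 * Suc M') * qP M')"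
      by (rule lowz_X_power) (simp add: lowz_def)
    then show ?thesis by (rule lowz_mono) (use step(1) in simp)
  qed
  ultimately show ?case using step(3) lowz_diff by metis
qed

fun qc :: "nat \<Rightarrow> int \<Rightarrow> int fps" where
  "qc 0 k = (if k = 0 then 1 else 0)"
| "qc (Suc N) k = (1 + fps_X ^ (2 * (2 * N + 1))) * qc N k
     + fps_X ^ (2 * N + 1) * (qc N (k - 1) + qc N (k + 1))"

lemma qc_out: "\<bar>k\<bar> > int N \<Longrightarrow> qc N k = 0"
  by (induction N arbitrary: k) auto

lemma qc_sym: "qc N (- k) = qc N k"
proof (induction N arbitrary: k)
  case 0 then show ?case by simp
next
  case (Suc N)
  have "qc N (- k - 1) = qc N (k + 1)" using Suc[of "k+1"] by (metis minus_diff_commute minus_diff_eq diff_minus_eq_add add.commute)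
  moreover have "qc N (- k + 1) = qc N (k - 1)" using Suc[of "k-1"] by simp
  ultimately show ?case using Suc[of k] by (simp add: algebra_simps)
qed

lemma qc_top: "qc N (int N) = fps_X ^ (N^2)"
proof (induction N)
  case 0 then show ?case by simp
next
  case (Suc N)
  have "qc N (int N + 1) = 0" "qc N (int N + 2) = 0" by (auto intro: qc_out)
  then have "qc (Suc N) (int (Suc N)) = fps_X ^ (2 * N + 1) * fps_X ^ (N^2)"
    using Suc by (simp add: algebra_simps)
  also have "\<dots> = fps_X ^ ((Suc N)^2)" by (simp add: power_add[symmetric] power2_eq_square)
  finally show ?case .
qed

lemma key_identity:
  fixes q B M C :: "'a::comm_ring_1"
  shows "(1+q^2*B^4*M^4)*(C*B^2)*((1-q^2*B^4*M^2)*(1-q^2*M^2))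
   + q*B^2*M^2*((C*q)*((1-B^4*M^2)*(1-q^2*B^4*M^2)))
   + q*B^2*M^2*((C*B^4*q)*((1-M^2)*(1-q^2*M^2)))
   = C*B^2*((1-q^2*B^4*M^4)*(1-q^4*B^4*M^4))"
  by (simp add: algebra_simps power2_eq_square power4_eq_xxxx)

lemma pw: "(x::'a::monoid_mult) ^ (n * k) = (x ^ k) ^ n"
  by (simp add: power_mult mult.commute)

lemma qc_closed: "k \<le> N \<Longrightarrow> qP (N + k) * qP (N - k) * qc N (int k) = fps_X ^ (k^2) * qP (2 * N)"
proof (induction N arbitrary: k)
  case 0 then show ?case by simp
next
  case (Suc N k)
  show ?case
  proof (cases "k = Suc N")
    case True
    have "Suc N + k = 2 * Suc N" "Suc N - k = 0" using True by auto
    then show ?thesis using qc_top[of "Suc N"] True by (simp del: qc.simps add: mult.commute mult_2_right)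
  next
    case False
    with Suc.prems have kN: "k \<le> N" by simp
    define m where "m = N - k"
    have Nkm: "N = k + m" using kN m_def by simp
    define e where "e = (if k = 0 then 1 else (k - 1)^2)"
    define Y where "Y = qP (2 * N)"
    define Aa where "Aa = qP (Suc N + k) * qP (Suc N - k)"
    have e1: "e + 2 * k = k^2 + 1" and e2: "e + 4 * k + 1 = (k + 1)^2 + 1"
      unfolding e_def by (cases k; simp add: power2_eq_square)+
    have h0: "qP (N + k) * qP (N - k) * qc N (int k) = fps_X ^ (k^2) * Y"
      using Suc.IH[OF kN] Y_def by simp
    have sucNk: "Suc N - k = Suc (N - k)" using kN by simp
    have t1: "Aa * qc N (int k) = ((1 - fps_X^(2*(N+k+1))) * (1 - fps_X^(2*(N+1-k)))) * (fps_X ^ (k^2) * Y)"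
      unfolding Aa_def sucNk h0[symmetric] by (simp add: qP_Suc sucNk algebra_simps)
    have t2: "Aa * qc N (int k - 1) = ((1 - fps_X^(2*(N+k))) * (1 - fps_X^(2*(N+k+1)))) * (fps_X ^ e * Y)"
    proof (cases "k = 0")
      case True
      show ?thesis
      proof (cases N)
        case 0 then show ?thesis using True by simp
      next
        case (Suc N')
        have c1: "qc N (- 1) = qc N 1" using qc_sym[of N 1] by simp
        have h1: "qP (N + 1) * qP (N - 1) * qc N 1 = fps_X * Y"
          using Suc.IH[of 1] Suc Y_def by simp
        have p1: "qP (Suc N) = qP (N - 1) * ((1 - fps_X^(2*N)) * (1 - fps_X^(2*(N+1))))"
          using Suc by (simp add: qP_Suc)
        have "Aa * qc N (int k - 1) = qP (Suc N) * qP (Suc N) * qc N 1"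
          unfolding Aa_def using True c1 by simp
        also have "\<dots> = ((1 - fps_X^(2*N)) * (1 - fps_X^(2*(N+1)))) * (qP (N + 1) * qP (N - 1) * qc N 1)"
          by (subst (2) p1) (simp add: algebra_simps)
        also have "\<dots> = ((1 - fps_X^(2*N)) * (1 - fps_X^(2*(N+1)))) * (fps_X * Y)"
          by (simp only: h1)
        finally show ?thesis using True unfolding e_def by simp
      qed
    next
      case False
      then obtain k' where k': "k = Suc k'" by (cases k) auto
      have h1: "qP (N + k') * qP (N - k') * qc N (int k') = fps_X ^ (k'^2) * Y"
        using Suc.IH[of k'] kN k' Y_def by simp
      have p1: "qP (Suc N + k) = qP (N + k') * ((1 - fps_X^(2*(N+k))) * (1 - fps_X^(2*(N+k+1))))"
        using k' by (simp add: qP_Suc)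
      have p2: "Suc N - k = N - k'" using k' kN by simp
      have p3: "int k - 1 = int k'" using k' by simp
      have "Aa * qc N (int k - 1) = ((1 - fps_X^(2*(N+k))) * (1 - fps_X^(2*(N+k+1))))
          * (qP (N + k') * qP (N - k') * qc N (int k'))"
        unfolding Aa_def p1 p2 p3 by (simp add: algebra_simps)
      also have "\<dots> = ((1 - fps_X^(2*(N+k))) * (1 - fps_X^(2*(N+k+1)))) * (fps_X ^ (k'^2) * Y)"
        by (simp only: h1)
      finally show ?thesis unfolding e_def using k' by simp
    qed
    have t3: "Aa * qc N (int k + 1) = ((1 - fps_X^(2*(N-k))) * (1 - fps_X^(2*(N-k+1)))) * (fps_X ^ ((k+1)^2) * Y)"
    proof (cases "k = N")
      case True
      then show ?thesis using qc_out[of N "int k + 1"] by simp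
    next
      case False
      with kN have kN': "k + 1 \<le> N" by simp
      have "qP (Suc N - k) = qP (N - (k+1)) * ((1 - fps_X^(2*(N-k))) * (1 - fps_X^(2*(N-k+1))))"
      proof -
        obtain j where j: "N - k = Suc j" "N - (k+1) = j" using kN' by (metis Suc_diff_le Suc_eq_plus1 diff_Suc_Suc)
        show ?thesis unfolding sucNk j by (simp add: qP_Suc algebra_simps)
      qed
      note p = this
      have s: "Suc N + k = N + (k + 1)" by simp
      have "Aa * qc N (int k + 1) = qP (N + (k+1)) * (qP (N - (k+1)) * ((1 - fps_X^(2*(N-k))) * (1 - fps_X^(2*(N-k+1))))) * qc N (int (k+1))"
        unfolding Aa_def p s by (simp add: add.commute)
      also have "\<dots> = ((1 - fps_X^(2*(N-k))) * (1 - fps_X^(2*(N-k+1))))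
          * (qP (N + (k+1)) * qP (N - (k+1)) * qc N (int (k+1)))"
        by (simp only: mult_ac)
      also have "\<dots> = ((1 - fps_X^(2*(N-k))) * (1 - fps_X^(2*(N-k+1)))) * (fps_X ^ ((k+1)^2) * Y)"
        using Suc.IH[OF kN'] Y_def by simp
      finally show ?thesis .
    qed
    have rhs: "qP (2 * Suc N) = Y * ((1 - fps_X^(4*N+2)) * (1 - fps_X^(4*N+4)))"
    proof -
      have a: "2 * Suc N = Suc (Suc (2*N))" "2 * Suc (2*N) = 4*N+2" "2 * Suc (Suc (2*N)) = 4*N+4" by simp_all
      show ?thesis unfolding Y_def a(1) qP_Suc a(2,3) by (simp only: mult_ac)
    qed
    define q :: "int fps" where "q = fps_X"
    define B :: "int fps" where "B = fps_X ^ k"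
    define M :: "int fps" where "M = fps_X ^ m"
    define C :: "int fps" where "C = fps_X ^ e"
    have x1: "fps_X^(2*(N+k+1)) = q^2*B^4*M^2" unfolding q_def B_def M_def Nkm
      by (simp add: power_add[symmetric] pw[symmetric] algebra_simps)
    have x2: "fps_X^(2*(N+1-k)) = q^2*M^2" unfolding q_def B_def M_def Nkm
      by (simp add: power_add[symmetric] pw[symmetric] algebra_simps)
    have x3: "fps_X^(2*(N+k)) = B^4*M^2" unfolding q_def B_def M_def Nkm
      by (simp add: power_add[symmetric] pw[symmetric] algebra_simps)
    have x4: "fps_X^(2*(N-k)) = M^2" unfolding q_def B_def M_def Nkm
      by (simp add: power_add[symmetric] pw[symmetric] algebra_simps)
    have x5: "fps_X^(2*(N-k+1)) = q^2*M^2" unfolding q_def B_def M_def Nkm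
      by (simp add: power_add[symmetric] pw[symmetric] algebra_simps)
    have x6: "fps_X^(2*N+1) = q*B^2*M^2" unfolding q_def B_def M_def Nkm
      by (simp add: power_add[symmetric] pw[symmetric] algebra_simps)
    have x7: "fps_X^(2*(2*N+1)) = q^2*B^4*M^4" unfolding q_def B_def M_def Nkm
      by (simp add: power_add[symmetric] pw[symmetric] algebra_simps)
    have x8: "fps_X^(4*N+2) = q^2*B^4*M^4" unfolding q_def B_def M_def Nkm
      by (simp add: power_add[symmetric] pw[symmetric] algebra_simps)
    have x9: "fps_X^(4*N+4) = q^4*B^4*M^4" unfolding q_def B_def M_def Nkm
      by (simp add: power_add[symmetric] pw[symmetric] algebra_simps)
    have y1: "fps_X^(k^2) * q = C * B^2" unfolding q_def B_def C_def
      by (simp add: power_add[symmetric] pw[symmetric] e1 power_Suc2[symmetric])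
    have y2: "fps_X^e * q = C * q" unfolding q_def C_def by simp
    have y3: "fps_X^((k+1)^2) * q = C * B^4 * q"
    proof -
      have "fps_X^((k+1)^2) * q = (fps_X :: int fps)^((k+1)^2 + 1)" unfolding q_def by simp
      also have "\<dots> = fps_X^(e + 4*k + 1)" using e2 by simp
      also have "\<dots> = C * B^4 * q" unfolding q_def B_def C_def power_add pw by simp
      finally show ?thesis .
    qed
    have "Aa * qc (Suc N) (int k) = (1 + fps_X ^ (2 * (2 * N + 1))) * (Aa * qc N (int k))
       + fps_X ^ (2 * N + 1) * (Aa * qc N (int k - 1) + Aa * qc N (int k + 1))"
      by (simp add: algebra_simps)
    also have "\<dots> = (1 + fps_X ^ (2 * (2 * N + 1))) * (((1 - fps_X^(2*(N+k+1))) * (1 - fps_X^(2*(N+1-k)))) * (fps_X ^ (k^2) * Y))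
       + fps_X ^ (2 * N + 1) * (((1 - fps_X^(2*(N+k))) * (1 - fps_X^(2*(N+k+1)))) * (fps_X ^ e * Y)
          + ((1 - fps_X^(2*(N-k))) * (1 - fps_X^(2*(N-k+1)))) * (fps_X ^ ((k+1)^2) * Y))"
      by (simp only: t1 t2 t3)
    finally have L0: "Aa * qc (Suc N) (int k) = (1 + fps_X ^ (2 * (2 * N + 1))) * (((1 - fps_X^(2*(N+k+1))) * (1 - fps_X^(2*(N+1-k)))) * (fps_X ^ (k^2) * Y))
       + fps_X ^ (2 * N + 1) * (((1 - fps_X^(2*(N+k))) * (1 - fps_X^(2*(N+k+1)))) * (fps_X ^ e * Y)
          + ((1 - fps_X^(2*(N-k))) * (1 - fps_X^(2*(N-k+1)))) * (fps_X ^ ((k+1)^2) * Y))" .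
    have L: "q * (Aa * qc (Suc N) (int k)) = Y * (
        (1+q^2*B^4*M^4)*(fps_X^(k^2) * q)*((1-q^2*B^4*M^2)*(1-q^2*M^2))
      + q*B^2*M^2*((fps_X^e * q)*((1-B^4*M^2)*(1-q^2*B^4*M^2)))
      + q*B^2*M^2*((fps_X^((k+1)^2) * q)*((1-M^2)*(1-q^2*M^2))))"
      unfolding L0 x1 x2 x3 x4 x5 x6 x7 by (simp add: algebra_simps)
    have R: "q * (fps_X ^ (k^2) * qP (2 * Suc N)) = Y * ((fps_X^(k^2) * q)*((1-q^2*B^4*M^4)*(1-q^4*B^4*M^4)))"
      unfolding rhs x8 x9 by (simp add: algebra_simps)
    have "q * (Aa * qc (Suc N) (int k)) = q * (fps_X ^ (k^2) * qP (2 * Suc N))"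
      unfolding L R y1 y2 y3 key_identity ..
    then have "Aa * qc (Suc N) (int k) = fps_X ^ (k^2) * qP (2 * Suc N)"
      unfolding q_def by simp
    then show ?thesis unfolding Aa_def by simp
  qed
qed



definition qO :: "nat \<Rightarrow> int fps" where
  "qO N = (\<Prod>i=1..N. (1 + fps_X ^ (2 * i - 1))^2)"

lemma sum_shift_int: "(\<Sum>k\<in>{a..b::int}. f (k + d)) = (\<Sum>k\<in>{a+d..b+d}. f k)"
  by (rule sum.reindex_bij_witness[where i="\<lambda>k. k - d" and j="\<lambda>k. k + d"]) auto

lemma sum_supp:
  assumes "\<And>k. \<bar>k\<bar> > int N \<Longrightarrow> f k = 0" "a \<le> - int N" "int N \<le> b"
  shows "(\<Sum>k\<in>{a..b}. f k) = (\<Sum>k\<in>{- int N..int N}. f k)"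
  by (rule sum.mono_neutral_right) (use assms in auto)

lemma qc_sum: "(\<Sum>k\<in>{- int N..int N}. qc N k) = qO N"
proof (induction N)
  case 0 then show ?case by (simp add: qO_def)
next
  case (Suc N)
  let ?S = "\<Sum>k\<in>{- int N..int N}. qc N k"
  let ?I = "{- int (Suc N)..int (Suc N)}"
  have z: "\<And>k. \<bar>k\<bar> > int N \<Longrightarrow> qc N k = 0" by (rule qc_out)
  have s0: "(\<Sum>k\<in>?I. qc N k) = ?S" by (rule sum_supp[OF z]) auto
  have s1: "(\<Sum>k\<in>?I. qc N (k - 1)) = ?S"
    using sum_shift_int[where f="qc N" and a="- int (Suc N)" and b="int (Suc N)" and d="-1"] sum_supp[where N=N and f="qc N", OF z, where a="- int (Suc N) - 1" and b="int (Suc N) - 1"]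
    by simp
  have s2: "(\<Sum>k\<in>?I. qc N (k + 1)) = ?S"
    using sum_shift_int[where f="qc N" and a="- int (Suc N)" and b="int (Suc N)" and d="1"] sum_supp[where N=N and f="qc N", OF z, where a="- int (Suc N) + 1" and b="int (Suc N) + 1"]
    by simp
  have "(\<Sum>k\<in>?I. qc (Suc N) k) = (1 + fps_X ^ (2 * (2 * N + 1))) * (\<Sum>k\<in>?I. qc N k)
      + fps_X ^ (2 * N + 1) * ((\<Sum>k\<in>?I. qc N (k - 1)) + (\<Sum>k\<in>?I. qc N (k + 1)))"
    by (simp only: qc.simps distrib_left sum.distrib sum_distrib_left)
  also have "\<dots> = ((1 + fps_X ^ (2 * (2 * N + 1))) + 2 * fps_X ^ (2 * N + 1)) * ?S"
    unfolding s0 s1 s2 by (simp add: algebra_simps)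
  also have "(1 + fps_X ^ (2 * (2 * N + 1))) + 2 * fps_X ^ (2 * N + 1) = (1 + fps_X ^ (2 * Suc N - 1) :: int fps)^2"
  proof -
    have e: "2 * Suc N - 1 = 2*N+1" by simp
    have y: "(fps_X ^ (2*N+1) :: int fps) * fps_X^(2*N+1) = fps_X^(2*(2*N+1))"
      by (simp only: power_add[symmetric] mult_2)
    have g: "\<And>a::int fps. (1 + a)^2 = 1 + a * a + 2 * a" by algebra
    show ?thesis unfolding e g y ..
  qed
  finally show ?case using Suc by (simp add: qO_def mult.commute)
qed

lemma sq_ge: "2 * k \<le> k^2 + (1::nat)"
proof -
  show ?thesis by (cases k) (auto simp: power2_eq_square)
qed

lemma qc_coeff_nat:
  assumes "k \<le> N" "j \<le> N"
  shows "(qP N * qc N (int k)) $ j = (if j = k^2 then 1 else 0)"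
proof -
  define u where "u = qP N * qc N (int k) - fps_X ^ (k^2)"
  define A where "A = qP (2*N)" define n where "n = qP N"
  define b where "b = qP (N + k)" define c where "c = qP (N - k)"
  have cl: "b * c * qc N (int k) = fps_X ^ (k^2) * A"
    using qc_closed[OF assms(1)] unfolding A_def b_def c_def .
  have eq: "b * c * u = fps_X ^ (k^2) * ((A - c) * n + c * (n - c) - c * (b - c))"
  proof -
    have "b * c * u = n * (b * c * qc N (int k)) - b * c * fps_X ^ (k^2)"
      unfolding u_def n_def by (simp add: algebra_simps)
    also have "\<dots> = fps_X ^ (k^2) * ((A - c) * n + c * (n - c) - c * (b - c))"
      unfolding cl by (simp add: algebra_simps)
    finally show ?thesis .
  qed
  let ?m = "2 * (N - k) + 2"
  have l1: "lowz ?m (A - c)" unfolding A_def c_def by (rule qP_approx) simp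
  have l2: "lowz ?m (n - c)" unfolding n_def c_def by (rule qP_approx) simp
  have l3: "lowz ?m (b - c)" unfolding b_def c_def by (rule qP_approx) simp
  have "lowz ?m ((A - c) * n + c * (n - c) - c * (b - c))"
    using l1 l2 l3 by (intro lowz_diff lowz_add) (auto intro: lowz_mult_left lowz_mult_right)
  then have "lowz (?m + k^2) (b * c * u)" unfolding eq by (rule lowz_X_power)
  moreover have "N + 1 \<le> ?m + k^2" using sq_ge[of k] assms(1) by linarith
  ultimately have "lowz (N + 1) (b * c * u)" by (rule lowz_mono)
  moreover have "(b * c) $ 0 = 1" unfolding b_def c_def by (simp add: qP_nth0)
  ultimately have "lowz (N + 1) u" using lowz_cancel by blast
  then have "u $ j = 0" using assms(2) by (simp add: lowz_def)
  then show ?thesis unfolding u_def by simp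
qed

lemma qc_coeff:
  assumes "\<bar>k\<bar> \<le> int N" "j \<le> N"
  shows "(qP N * qc N k) $ j = (if int j = k^2 then 1 else 0)"
proof -
  have "qc N k = qc N (int (nat \<bar>k\<bar>))"
    by (cases "k \<ge> 0") (simp_all add: qc_sym[of N k, symmetric])
  moreover have "(int j = k^2) = (j = (nat \<bar>k\<bar>)^2)"
  proof -
    have "k^2 = int ((nat \<bar>k\<bar>)^2)" by simp
    then show ?thesis by linarith
  qed
  ultimately show ?thesis using qc_coeff_nat[of "nat \<bar>k\<bar>" N j] assms by simp
qed

lemma Q_coeff:
  assumes "j \<le> N"
  shows "(qP N * qO N) $ j = int (card {y::int. y^2 = int j})"
proof -
  have "(qP N * qO N) $ j = (\<Sum>k\<in>{- int N..int N}. (qP N * qc N k) $ j)"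
    unfolding qc_sum[symmetric] sum_distrib_left fps_sum_nth ..
  also have "\<dots> = (\<Sum>k\<in>{- int N..int N}. if k^2 = int j then 1 else 0)"
    by (intro sum.cong refl) (use assms in \<open>auto simp: qc_coeff\<close>)
  also have "\<dots> = int (card {k\<in>{- int N..int N}. k^2 = int j})"
    by (simp add: sum.inter_filter[symmetric])
  also have "{k\<in>{- int N..int N}. k^2 = int j} = {y::int. y^2 = int j}"
  proof safe
    fix y :: int assume y: "y^2 = int j"
    have "\<bar>y\<bar> \<le> y^2"
    proof (cases "y = 0")
      case False
      then have "\<bar>y\<bar> * 1 \<le> \<bar>y\<bar> * \<bar>y\<bar>" by (intro mult_left_mono) auto
      then show ?thesis by (simp add: power2_eq_square abs_mult_self_eq)
    qed simp
    then show "y \<in> {- int N..int N}" using y assms by auto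
  qed
  finally show ?thesis .
qed



definition Vs :: "nat \<Rightarrow> nat \<Rightarrow> (nat \<Rightarrow> int) set" where
  "Vs k m = {x :: nat \<Rightarrow> int. (\<forall>i\<ge>k. x i = 0) \<and> (\<Sum>i<k. (x i)^2) = int m}"

definition Ws :: "nat \<Rightarrow> int set" where
  "Ws j = {y::int. y^2 = int j}"

lemma r_Vs: "r k m = card (Vs k m)" by (simp add: r_def Vs_def)

lemma Ws_finite: "finite (Ws j)"
proof -
  have "Ws j \<subseteq> {- int j..int j}"
  proof
    fix y assume "y \<in> Ws j"
    then have y: "y^2 = int j" by (simp add: Ws_def)
    have "\<bar>y\<bar> \<le> y^2"
    proof (cases "y = 0")
      case False
      then have "\<bar>y\<bar> * 1 \<le> \<bar>y\<bar> * \<bar>y\<bar>" by (intro mult_left_mono) auto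
      then show ?thesis by (simp add: power2_eq_square abs_mult_self_eq)
    qed simp
    then show "y \<in> {- int j..int j}" using y by auto
  qed
  then show ?thesis by (rule finite_subset) simp
qed

lemma r1_Ws: "r 1 j = card (Ws j)"
proof -
  have "bij_betw (\<lambda>x. x 0) (Vs 1 j) (Ws j)"
  proof (rule bij_betw_byWitness[where f'="\<lambda>y i. if i = 0 then y else 0"])
    show "\<forall>a\<in>Vs 1 j. (\<lambda>i. if i = 0 then a 0 else 0) = a"
      by (auto simp: Vs_def fun_eq_iff)
    show "\<forall>a'\<in>Ws j. (if (0::nat) = 0 then a' else 0) = a'" by simp
    show "(\<lambda>x. x 0) ` Vs 1 j \<subseteq> Ws j" by (auto simp: Vs_def Ws_def)
    show "(\<lambda>y i. if i = 0 then y else 0) ` Ws j \<subseteq> Vs 1 j" by (auto simp: Vs_def Ws_def)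
  qed
  then show ?thesis by (simp add: r_Vs bij_betw_same_card)
qed

lemma Vs_0: "Vs 0 m = (if m = 0 then {\<lambda>_. 0} else {})"
  by (auto simp: Vs_def fun_eq_iff)

lemma Vs_Suc: "Vs (Suc k) m = (\<lambda>(i, x, y). x(k := y)) ` (SIGMA i:{0..m}. Vs k i \<times> Ws (m - i))"
proof safe
  fix i x y assume i: "i \<in> {0..m}" and x: "x \<in> Vs k i" and y: "y \<in> Ws (m - i)"
  have xk: "x k = 0" using x by (simp add: Vs_def)
  have "(\<Sum>l<Suc k. ((x(k := y)) l)^2) = (\<Sum>l<k. (x l)^2) + y^2"
    by (simp add: sum.lessThan_Suc)
  also have "\<dots> = int m" using x y i by (simp add: Vs_def Ws_def)
  finally show "x(k := y) \<in> Vs (Suc k) m" using x by (auto simp: Vs_def)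
next
  fix f assume f: "f \<in> Vs (Suc k) m"
  define s where "s = (\<Sum>l<k. (f l)^2)"
  have s0: "s \<ge> 0" unfolding s_def by (intro sum_nonneg) simp
  have sm: "s + (f k)^2 = int m" using f by (simp add: Vs_def s_def sum.lessThan_Suc)
  have fk: "(f k)^2 \<ge> 0" by simp
  have "s \<le> int m" using sm fk by linarith
  then have "nat s \<in> {0..m}" by (simp add: nat_le_iff)
  moreover have "f(k := 0) \<in> Vs k (nat s)"
  proof -
    have "\<forall>i\<ge>k. (f(k := 0)) i = 0" using f by (auto simp: Vs_def)
    moreover have "(\<Sum>l<k. ((f(k := 0)) l)^2) = s" unfolding s_def by (intro sum.cong) auto
    ultimately show ?thesis using s0 by (simp add: Vs_def)
  qed
  moreover have "f k \<in> Ws (m - nat s)"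
  proof -
    have "int (m - nat s) = int m - s" using \<open>s \<le> int m\<close> s0 by (simp add: of_nat_diff)
    then show ?thesis using sm by (simp add: Ws_def)
  qed
  moreover have "f = (f(k := 0))(k := f k)" by simp
  ultimately show "f \<in> (\<lambda>(i, x, y). x(k := y)) ` (SIGMA i:{0..m}. Vs k i \<times> Ws (m - i))"
    by (intro image_eqI[where x="(nat s, f(k := 0), f k)"]) auto
qed

lemma Vs_Suc_inj: "inj_on (\<lambda>(i, x, y). x(k := y)) (SIGMA i:{0..m}. Vs k i \<times> Ws (m - i))"
proof (rule inj_onI, clarsimp)
  fix i x y i' x' y'
  assume x: "x \<in> Vs k i" and x': "x' \<in> Vs k i'" and eq: "x(k := y) = x'(k := y')"
  have "x k = 0" "x' k = 0" using x x' by (auto simp: Vs_def)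
  then have xx: "x = x'" using eq by (metis fun_upd_triv fun_upd_upd)
  have yy: "y = y'" using eq by (metis fun_upd_same)
  have "int i = int i'" using x x' xx by (simp add: Vs_def)
  then show "i = i' \<and> x = x' \<and> y = y'" using xx yy by simp
qed

lemma Vs_finite: "finite (Vs k m)"
proof (induction k arbitrary: m)
  case 0 then show ?case by (simp add: Vs_0)
next
  case (Suc k) then show ?case
    unfolding Vs_Suc by (intro finite_imageI finite_SigmaI finite_cartesian_product Ws_finite) auto
qed

lemma r_Suc: "r (Suc k) m = (\<Sum>i=0..m. r k i * r 1 (m - i))"
proof -
  have "r (Suc k) m = card (SIGMA i:{0..m}. Vs k i \<times> Ws (m - i))"
    unfolding r_Vs Vs_Suc by (rule card_image[OF Vs_Suc_inj])
  also have "\<dots> = (\<Sum>i=0..m. card (Vs k i \<times> Ws (m - i)))"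
    by (rule card_SigmaI) (auto intro: finite_cartesian_product Vs_finite Ws_finite)
  also have "\<dots> = (\<Sum>i=0..m. r k i * r 1 (m - i))"
    by (intro sum.cong refl) (simp add: card_cartesian_product r1_Ws[simplified] r_Vs[of k])
  finally show ?thesis .
qed

definition Tq :: "int fps" where "Tq = Abs_fps (\<lambda>m. int (r 1 m))"

lemma Tq_nth: "Tq $ j = int (r 1 j)" unfolding Tq_def by (rule fps_nth_Abs_fps)

lemma Tq_pow: "(Tq ^ k) $ m = int (r k m)"
proof (induction k arbitrary: m)
  case 0
  have "r 0 m = (if m = 0 then 1 else 0)" by (simp add: r_Vs Vs_0)
  then show ?case by simp
next
  case (Suc k)
  have "(Tq ^ Suc k) $ m = (Tq ^ k * Tq) $ m" by (simp only: power_Suc2)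
  also have "\<dots> = (\<Sum>i=0..m. int (r k i) * int (r 1 (m - i)))"
    unfolding fps_mult_nth Suc.IH Tq_nth ..
  also have "\<dots> = int (r (Suc k) m)" unfolding r_Suc[of k m] by simp
  finally show ?case .
qed



definition LD :: "int fps \<Rightarrow> int fps \<Rightarrow> bool" where
  "LD f F \<longleftrightarrow> fps_X * fps_deriv f = f * F"

lemma LD_mult: "LD f F \<Longrightarrow> LD g G \<Longrightarrow> LD (f * g) (F + G)"
proof -
  assume f: "LD f F" and g: "LD g G"
  have "fps_X * fps_deriv (f * g) = (fps_X * fps_deriv f) * g + f * (fps_X * fps_deriv g)"
    by (simp add: algebra_simps)
  also have "\<dots> = f * g * (F + G)" using f g unfolding LD_def by (simp add: algebra_simps)
  finally show ?thesis unfolding LD_def .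
qed

lemma LD_one: "LD 1 0" by (simp add: LD_def)

lemma LD_power: "LD f F \<Longrightarrow> LD (f ^ k) (fps_const (int k) * F)"
proof (induction k)
  case 0 then show ?case by (simp add: LD_def)
next
  case (Suc k)
  have "LD (f * f ^ k) (F + fps_const (int k) * F)" by (rule LD_mult[OF Suc.prems Suc.IH[OF Suc.prems]])
  moreover have "F + fps_const (int k) * F = fps_const (int (Suc k)) * F"
    by (simp add: algebra_simps fps_const_add[symmetric])
  ultimately show ?case by simp
qed

lemma LD_prod: fixes N :: nat shows "(\<And>i. i \<in> {1..N} \<Longrightarrow> LD (g i) (G i)) \<Longrightarrow> LD (\<Prod>i=1..N. g i) (\<Sum>i=1..N. G i)"
proof (induction N)
  case 0 then show ?case by (simp add: LD_one)
next
  case (Suc N)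
  then show ?case by (simp add: LD_mult)
qed

definition Gm :: "nat \<Rightarrow> int fps" where
  "Gm e = Abs_fps (\<lambda>i. if 0 < i \<and> e dvd i then - int e else 0)"

definition Hp :: "nat \<Rightarrow> int fps" where
  "Hp e = Abs_fps (\<lambda>i. if 0 < i \<and> e dvd i then int e * (-1)^(i div e + 1) else 0)"

lemma X_deriv_Xpow: "fps_X * fps_deriv (fps_X ^ e :: int fps) = of_nat e * fps_X ^ e"
proof (cases e)
  case (Suc m)
  have "fps_deriv (fps_X ^ Suc m :: int fps) = of_nat (Suc m) * fps_X ^ m"
    by (subst fps_deriv_power') simp
  then show ?thesis using Suc by (simp add: algebra_simps)
qed simp

lemma LD_minus:
  assumes "0 < e" shows "LD (1 - fps_X ^ e) (Gm e)"
proof -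
  have l: "fps_X * fps_deriv (1 - fps_X ^ e) = - (of_nat e * fps_X ^ e :: int fps)"
    using X_deriv_Xpow[of e] by simp
  have "(1 - fps_X ^ e) * Gm e = - (of_nat e * fps_X ^ e)"
  proof (rule fps_ext)
    fix i
    have "((1 - fps_X ^ e) * Gm e) $ i = Gm e $ i - (if i < e then 0 else Gm e $ (i - e))"
      by (simp add: algebra_simps fps_X_power_mult_nth fps_X_power_mult_right_nth)
    also have "\<dots> = (if i = e then - int e else 0)"
    proof (cases "i < e")
      case True
      then show ?thesis using assms by (auto simp: Gm_def dest: dvd_imp_le)
    next
      case False
      show ?thesis
      proof (cases "i = e")
        case True then show ?thesis using assms by (simp add: Gm_def)
      next
        case False
        with \<open>\<not> i < e\<close> have "e < i" by simp
        then have "e dvd i \<longleftrightarrow> e dvd (i - e)" using dvd_minus_self[of e i] by auto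
        then show ?thesis using \<open>e < i\<close> by (simp add: Gm_def)
      qed
    qed
    also have "\<dots> = (- (of_nat e * fps_X ^ e :: int fps)) $ i" by simp
    finally show "((1 - fps_X ^ e) * Gm e) $ i = (- (of_nat e * fps_X ^ e :: int fps)) $ i" .
  qed
  then show ?thesis using l by (simp add: LD_def)
qed

lemma LD_plus:
  assumes "0 < e" shows "LD (1 + fps_X ^ e) (Hp e)"
proof -
  have l: "fps_X * fps_deriv (1 + fps_X ^ e) = (of_nat e * fps_X ^ e :: int fps)"
    using X_deriv_Xpow[of e] by simp
  have "(1 + fps_X ^ e) * Hp e = of_nat e * fps_X ^ e"
  proof (rule fps_ext)
    fix i
    have "((1 + fps_X ^ e) * Hp e) $ i = Hp e $ i + (if i < e then 0 else Hp e $ (i - e))"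
      by (simp add: algebra_simps fps_X_power_mult_nth fps_X_power_mult_right_nth)
    also have "\<dots> = (if i = e then int e else 0)"
    proof (cases "i < e")
      case True
      then show ?thesis using assms by (auto simp: Hp_def dest: dvd_imp_le)
    next
      case False
      show ?thesis
      proof (cases "i = e")
        case True then show ?thesis using assms by (simp add: Hp_def)
      next
        case False
        with \<open>\<not> i < e\<close> have ei: "e < i" by simp
        then have dv: "e dvd i \<longleftrightarrow> e dvd (i - e)" using dvd_minus_self[of e i] by auto
        show ?thesis
        proof (cases "e dvd i")
          case True
          then obtain t where t: "i = e * t" by blast
          have t1: "t \<ge> 2"
          proof (rule ccontr)
            assume "\<not> t \<ge> 2"
            then have "t = 0 \<or> t = 1" by auto
            then show False using t ei assms by auto
          qed
          have "i - e = e * (t - 1)" using t by (simp add: algebra_simps diff_mult_distrib2)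
          then have "(i - e) div e = t - 1" "i div e = t" using t assms by simp_all
          moreover have "(-1::int)^(t + 1) + (-1)^(t - 1 + 1) = 0"
            using t1 by (cases t) (auto)
          ultimately show ?thesis using True dv ei assms
            by (simp add: Hp_def distrib_left[symmetric])
        next
          case False
          then show ?thesis using dv ei by (simp add: Hp_def)
        qed
      qed
    qed
    also have "\<dots> = (of_nat e * fps_X ^ e :: int fps) $ i" by simp
    finally show "((1 + fps_X ^ e) * Hp e) $ i = (of_nat e * fps_X ^ e :: int fps) $ i" .
  qed
  then show ?thesis using l by (simp add: LD_def)
qed



definition AN :: "nat \<Rightarrow> int fps" where
  "AN N = (\<Sum>j=1..N. Gm (2 * j)) + (\<Sum>i=1..N. fps_const (int 2) * Hp (2 * i - 1))"

lemma LD_Q: "LD (qP N * qO N) (AN N)"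
proof -
  have "LD (qP N) (\<Sum>j=1..N. Gm (2 * j))"
    unfolding qP_def by (rule LD_prod) (rule LD_minus, simp)
  moreover have "LD (qO N) (\<Sum>i=1..N. fps_const (int 2) * Hp (2 * i - 1))"
    unfolding qO_def by (rule LD_prod) (rule LD_power, rule LD_plus, simp)
  ultimately show ?thesis unfolding AN_def by (rule LD_mult)
qed

lemma AN_0: "AN N $ 0 = 0"
  by (simp add: AN_def fps_sum_nth Gm_def Hp_def)

lemma pair_sum: "(\<Sum>d=1..2*N. h d) = (\<Sum>j=1..N. h (2*j - 1) + h (2*j)) " for h :: "nat \<Rightarrow> int"
proof (induction N)
  case 0 then show ?case by simp
next
  case (Suc N)
  have "2 * Suc N = Suc (Suc (2 * N))" by simp
  then have "(\<Sum>d=1..2*Suc N. h d) = (\<Sum>d=1..2*N. h d) + h (Suc (2*N)) + h (Suc (Suc (2*N)))"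
    by simp
  then show ?case using Suc by simp
qed

lemma sigma_sum: "sigma n = (\<Sum>d=1..n. if d dvd n then d else 0)"
proof (cases "n = 0")
  case True
  then have "{d. d dvd n \<and> 0 < d} = {0::nat<..}" by auto
  moreover have "infinite {0::nat<..}" by (rule infinite_Ioi)
  ultimately show ?thesis using True by (simp add: sigma_def)
next
  case False
  then have "{d. d dvd n \<and> 0 < d} = {d\<in>{1..n}. d dvd n}"
    by (auto dest: dvd_imp_le)
  then have "sigma n = (\<Sum>d\<in>{d\<in>{1..n}. d dvd n}. d)" by (simp add: sigma_def)
  also have "\<dots> = (\<Sum>d=1..n. if d dvd n then d else 0)" by (rule sum.inter_filter) simp
  finally show ?thesis .
qed

lemma sigma_odd_sum: "sigma_odd n = (\<Sum>d=1..n. if d dvd n \<and> odd d then d else 0)"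
proof (cases "n = 0")
  case True
  then have "{d. d dvd n \<and> 0 < d \<and> odd d} = {d::nat. odd d}" by (auto intro: odd_pos)
  moreover have "infinite {d::nat. odd d}"
  proof
    assume "finite {d::nat. odd d}"
    then obtain m where m: "\<forall>x\<in>{d::nat. odd d}. x \<le> m" unfolding finite_nat_set_iff_bounded_le by blast
    have "odd (2 * m + 1)" by simp
    then have "2 * m + 1 \<le> m" using m by blast
    then show False by simp
  qed
  ultimately show ?thesis using True by (simp add: sigma_odd_def)
next
  case False
  then have "{d. d dvd n \<and> 0 < d \<and> odd d} = {d\<in>{1..n}. d dvd n \<and> odd d}"
    by (auto dest: dvd_imp_le)
  then have "sigma_odd n = (\<Sum>d\<in>{d\<in>{1..n}. d dvd n \<and> odd d}. d)" by (simp add: sigma_odd_def)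
  also have "\<dots> = (\<Sum>d=1..n. if d dvd n \<and> odd d then d else 0)" by (rule sum.inter_filter) simp
  finally show ?thesis .
qed

lemma AN_coeff:
  assumes n1: "1 \<le> n" and n2: "n \<le> 2 * N"
  shows "AN N $ n = (-1)^(n+1) * int (sigma n + sigma_odd n)"
proof -
  define h where "h d = (if d dvd n then (if even d then - int d else 2 * int d * (-1)^(n div d + 1)) else 0)" for d
  have g: "(\<Sum>j=1..N. Gm (2 * j)) $ n = (\<Sum>j=1..N. h (2 * j))"
    unfolding fps_sum_nth using n1 by (intro sum.cong refl) (simp add: Gm_def h_def)
  have o: "(\<Sum>i=1..N. fps_const (int 2) * Hp (2 * i - 1)) $ n = (\<Sum>j=1..N. h (2 * j - 1))"
    unfolding fps_sum_nth using n1 by (intro sum.cong refl) (auto simp: Hp_def h_def)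
  have "AN N $ n = (\<Sum>j=1..N. h (2*j - 1) + h (2*j))"
    unfolding AN_def fps_add_nth g o by (simp add: sum.distrib)
  also have "\<dots> = (\<Sum>d=1..2*N. h d)" by (rule pair_sum[symmetric])
  also have "\<dots> = (\<Sum>d=1..n. h d)"
    by (rule sum.mono_neutral_right) (use n1 n2 in \<open>auto simp: h_def dest: dvd_imp_le\<close>)
  also have "\<dots> = (\<Sum>d=1..n. (-1)^(n+1) * ((if d dvd n then int d else 0) + (if d dvd n \<and> odd d then int d else 0)))"
  proof (intro sum.cong refl)
    fix d assume d: "d \<in> {1..n}"
    show "h d = (-1)^(n+1) * ((if d dvd n then int d else 0) + (if d dvd n \<and> odd d then int d else 0))"
    proof (cases "d dvd n")
      case True
      then obtain t where t: "n = d * t" by blast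
      show ?thesis
      proof (cases "even d")
        case True
        then have "even n" using t by simp
        then show ?thesis using True \<open>d dvd n\<close> by (simp add: h_def)
      next
        case False
        have tt: "n div d = t" using t d by simp
        have "even t \<longleftrightarrow> even n" using t False by simp
        then have "(-1::int)^(t+1) = (-1)^(n+1)" by (simp add: minus_one_power_iff)
        then show ?thesis using False \<open>d dvd n\<close> by (simp add: h_def tt algebra_simps)
      qed
    qed (simp add: h_def)
  qed
  also have "\<dots> = (-1)^(n+1) * (int (sigma n) + int (sigma_odd n))"
    unfolding sigma_sum sigma_odd_sum sum_distrib_left[symmetric] sum.distrib of_nat_sum
    by (intro arg_cong2[where f="(*)"] refl arg_cong2[where f="(+)"] sum.cong) auto
  finally show ?thesis by simp
qed



lemma sign_lemma: "i \<le> n \<Longrightarrow> (-1::int)^(n+1) * (-1)^(i+1) = (-1)^(n-i)"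
proof -
  assume "i \<le> n"
  then obtain d where d: "n = i + d" by (metis le_add_diff_inverse)
  have "(-1::int)^(n+1) * (-1)^(i+1) = (-1)^(d + 2 * (i + 1))"
  proof -
    have "n + 1 + (i + 1) = d + 2 * (i + 1)" using d by simp
    then show ?thesis by (metis power_add)
  qed
  also have "\<dots> = (-1)^d" by (simp add: power_add power_mult)
  finally show ?thesis using d by simp
qed

theorem mainTheorem17:
  fixes k n :: nat
  assumes "k \<ge> 2" and "n \<ge> 1"
  shows "int k * (\<Sum>i=1..n. int (sigma i + sigma_odd i) * (-1)^(n - i) * int (r k (n - i)))
         = (-1)^(n + 1) * int n * int (r k n)"
proof -
  define Q where "Q = qP n * qO n"
  define s where "s i = int (sigma i + sigma_odd i)" for i
  have LDk: "LD (Q ^ k) (fps_const (int k) * AN n)"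
    unfolding Q_def by (rule LD_power[OF LD_Q])
  have cQ: "Q $ j = Tq $ j" if "j \<le> n" for j
    using Q_coeff[OF that] unfolding Q_def Tq_nth r1_Ws Ws_def .
  have "lowz (n + 1) (Q - Tq)" using cQ by (auto simp: lowz_def)
  then have "lowz (n + 1) (Q ^ k - Tq ^ k)" by (rule lowz_power_diff)
  then have cQk: "(Q ^ k) $ j = int (r k j)" if "j \<le> n" for j
    using that by (auto simp: lowz_def Tq_pow[symmetric])
  have "(fps_X * fps_deriv (Q ^ k)) $ n = (fps_const (int k) * AN n * Q ^ k) $ n"
    using LDk unfolding LD_def by (simp add: mult.commute)
  moreover have "(fps_X * fps_deriv (Q ^ k)) $ n = int n * int (r k n)"
    using assms(2) cQk[of n] by simp
  moreover have "(fps_const (int k) * AN n * Q ^ k) $ n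
      = (\<Sum>i=1..n. int k * ((-1)^(i+1) * s i) * int (r k (n - i)))"
  proof -
    have "(fps_const (int k) * AN n * Q ^ k) $ n = int k * (AN n * Q ^ k) $ n"
      by (simp only: mult.assoc fps_mult_left_const_nth)
    also have "\<dots> = int k * (\<Sum>i=0..n. AN n $ i * (Q ^ k) $ (n - i))"
      by (simp only: fps_mult_nth)
    also have "\<dots> = (\<Sum>i=0..n. int k * AN n $ i * (Q ^ k) $ (n - i))"
      by (simp add: sum_distrib_left mult.assoc)
    also have "\<dots> = int k * AN n $ 0 * (Q ^ k) $ (n - 0) + (\<Sum>i=Suc 0..n. int k * AN n $ i * (Q ^ k) $ (n - i))"
      by (simp add: sum.atLeast_Suc_atMost)
    also have "\<dots> = (\<Sum>i=1..n. int k * ((-1)^(i+1) * s i) * int (r k (n - i)))"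
      using assms(2) by (auto simp: AN_0 AN_coeff s_def cQk intro!: sum.cong)
    finally show ?thesis .
  qed
  ultimately have key: "int n * int (r k n) = (\<Sum>i=1..n. int k * ((-1)^(i+1) * s i) * int (r k (n - i)))"
    by simp
  have "(-1)^(n + 1) * int n * int (r k n) = (\<Sum>i=1..n. (-1)^(n+1) * (int k * ((-1)^(i+1) * s i) * int (r k (n - i))))"
    by (subst mult.assoc, subst key, rule sum_distrib_left)
  also have "\<dots> = (\<Sum>i=1..n. int k * (s i * (-1)^(n - i) * int (r k (n - i))))"
  proof (intro sum.cong refl)
    fix i assume "i \<in> {1..n}"
    then have "(-1::int)^(n+1) * (-1)^(i+1) = (-1)^(n-i)" by (intro sign_lemma) simp
    then show "(-1)^(n+1) * (int k * ((-1)^(i+1) * s i) * int (r k (n - i))) = int k * (s i * (-1)^(n - i) * int (r k (n - i)))"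
      by (metis (no_types, lifting) mult.assoc mult.left_commute)
  qed
  also have "\<dots> = int k * (\<Sum>i=1..n. int (sigma i + sigma_odd i) * (-1)^(n - i) * int (r k (n - i)))"
    by (simp add: sum_distrib_left s_def)
  finally show ?thesis by simp
qed


end
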